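(* Let $\rho$ be an $n$-qubit density matrix and define $\vec z\in\mathbb{C}^n$ by $z_i=\langle e_i|\rho|0^n\rangle$. If $\langle0^n|\rho|0^n\rangle=2/3+c$ for some $c>0$, then every $n$-qubit pure product state $|\pi\rangle$ satisfies \[ \langle\pi|\rho|\pi\rangle\le\langle0^n|\rho|0^n\rangle+\min\Big\{3\|\vec z\|_2,\ \frac{\|\vec z\|_2^2}{c}\Big\}. \]
   Context: $|e_i\rangle$ denotes the $n$-qubit computational basis state with $|1\rangle$ in position $i$ and $|0\rangle$ elsewhere; $|0^n\rangle$ is the all-zeros basis state. *)

theory Defs
  imports Complex_Main
begin

text \<open>n-qubit states/operators are indexed by computational basis indices j < 2^n;
  bit i of j (i.e. odd (j div 2^i)) is the state of qubit i. Thus the basis state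
  e_i (|1> in position i, |0> elsewhere) has index 2^i and 0^n has index 0.
  An operator is a function rho :: nat => nat => complex, rho j k = <j|rho|k>.\<close>

definition quad_form :: "nat \<Rightarrow> (nat \<Rightarrow> nat \<Rightarrow> complex) \<Rightarrow> (nat \<Rightarrow> complex) \<Rightarrow> complex" where
  "quad_form n \<rho> v = (\<Sum>j<2^n. \<Sum>k<2^n. cnj (v j) * \<rho> j k * v k)"

definition density_matrix :: "nat \<Rightarrow> (nat \<Rightarrow> nat \<Rightarrow> complex) \<Rightarrow> bool" where
  "density_matrix n \<rho> \<longleftrightarrow>
     (\<forall>j<2^n. \<forall>k<2^n. \<rho> k j = cnj (\<rho> j k)) \<and>
     (\<forall>v. 0 \<le> Re (quad_form n \<rho> v)) \<and>
     (\<Sum>j<2^n. \<rho> j j) = 1"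

definition pure_product_state :: "nat \<Rightarrow> (nat \<Rightarrow> complex) \<Rightarrow> bool" where
  "pure_product_state n \<psi> \<longleftrightarrow>
     (\<exists>a b :: nat \<Rightarrow> complex.
        (\<forall>i<n. (cmod (a i))\<^sup>2 + (cmod (b i))\<^sup>2 = 1) \<and>
        (\<forall>j<2^n. \<psi> j = (\<Prod>i<n. if odd (j div 2^i) then b i else a i)))"

definition zvec_norm :: "nat \<Rightarrow> (nat \<Rightarrow> nat \<Rightarrow> complex) \<Rightarrow> real" where
  "zvec_norm n \<rho> = sqrt (\<Sum>i<n. (cmod (\<rho> (2^i) 0))\<^sup>2)"

end

theory Submission
  imports Defs "HOL-Analysis.Convex"
begin


definition Bf :: "nat \<Rightarrow> (nat \<Rightarrow> nat \<Rightarrow> complex) \<Rightarrow> (nat \<Rightarrow> complex) \<Rightarrow> (nat \<Rightarrow> complex) \<Rightarrow> complex" where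
  "Bf n \<rho> u v = (\<Sum>j<2^n. \<Sum>k<2^n. cnj (u j) * \<rho> j k * v k)"

lemma Q_Bf: "quad_form n \<rho> v = Bf n \<rho> v v"
  by (simp add: quad_form_def Bf_def)

lemma Bf_herm:
  assumes "\<forall>j<2^n. \<forall>k<2^n. \<rho> k j = cnj (\<rho> j k)"
  shows "Bf n \<rho> v u = cnj (Bf n \<rho> u v)"
proof -
  have "Bf n \<rho> v u = (\<Sum>k<2^n. \<Sum>j<2^n. cnj (v j) * \<rho> j k * u k)"
    unfolding Bf_def by (rule sum.swap)
  also have "\<dots> = (\<Sum>k<2^n. \<Sum>j<2^n. cnj (cnj (u k) * \<rho> k j * v j))"
  proof (intro sum.cong refl)
    fix k j :: nat assume "k \<in> {..<2^n}" "j \<in> {..<2^n}"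
    hence h: "\<rho> j k = cnj (\<rho> k j)" by (intro assms[rule_format]) auto
    show "cnj (v j) * \<rho> j k * u k = cnj (cnj (u k) * \<rho> k j * v j)" unfolding h by (simp add: mult_ac)
  qed
  also have "\<dots> = cnj (Bf n \<rho> u v)" unfolding Bf_def by (simp add: cnj_sum)
  finally show ?thesis .
qed

lemma Bf_add_left: "Bf n \<rho> (\<lambda>j. u j + w j) v = Bf n \<rho> u v + Bf n \<rho> w v"
  unfolding Bf_def by (simp only: complex_cnj_add distrib_right sum.distrib)
lemma Bf_add_right: "Bf n \<rho> v (\<lambda>j. u j + w j) = Bf n \<rho> v u + Bf n \<rho> v w"
  unfolding Bf_def by (simp only: distrib_left sum.distrib)
lemma Bf_smult_left: "Bf n \<rho> (\<lambda>j. a * u j) v = cnj a * Bf n \<rho> u v"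
  unfolding Bf_def by (simp only: complex_cnj_mult mult.assoc sum_distrib_left)
lemma Bf_smult_right: "Bf n \<rho> v (\<lambda>j. a * u j) = a * Bf n \<rho> v u"
proof -
  have "\<And>j k. cnj (v j) * \<rho> j k * (a * u k) = a * (cnj (v j) * \<rho> j k * u k)" by simp
  thus ?thesis unfolding Bf_def by (simp only: sum_distrib_left)
qed

lemma ReQ_lin:
  assumes "\<forall>j<2^n. \<forall>k<2^n. \<rho> k j = cnj (\<rho> j k)"
  shows "Re (Bf n \<rho> (\<lambda>j. complex_of_real s * x j + complex_of_real t * y j) (\<lambda>j. complex_of_real s * x j + complex_of_real t * y j))
     = s^2 * Re (Bf n \<rho> x x) + t^2 * Re (Bf n \<rho> y y) + 2 * s * t * Re (Bf n \<rho> x y)"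
proof -
  have h: "Re (Bf n \<rho> y x) = Re (Bf n \<rho> x y)" using Bf_herm[OF assms, of y x] by simp
  let ?u = "\<lambda>j. complex_of_real s * x j" and ?w = "\<lambda>j. complex_of_real t * y j"
  have e: "Bf n \<rho> (\<lambda>j. ?u j + ?w j) (\<lambda>j. ?u j + ?w j) = Bf n \<rho> ?u ?u + Bf n \<rho> ?u ?w + (Bf n \<rho> ?w ?u + Bf n \<rho> ?w ?w)"
    by (simp only: Bf_add_left Bf_add_right)
  have e1: "Bf n \<rho> ?u ?u = complex_of_real (s*s) * Bf n \<rho> x x"
    by (simp only: Bf_smult_left Bf_smult_right complex_cnj_complex_of_real of_real_mult mult.assoc)
  have e2: "Bf n \<rho> ?u ?w = complex_of_real (s*t) * Bf n \<rho> x y"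
    by (simp only: Bf_smult_left Bf_smult_right complex_cnj_complex_of_real of_real_mult mult.assoc)
  have e3: "Bf n \<rho> ?w ?u = complex_of_real (s*t) * Bf n \<rho> y x"
    by (simp only: Bf_smult_left Bf_smult_right complex_cnj_complex_of_real) (simp add: mult_ac)
  have e4: "Bf n \<rho> ?w ?w = complex_of_real (t*t) * Bf n \<rho> y y"
    by (simp only: Bf_smult_left Bf_smult_right complex_cnj_complex_of_real of_real_mult mult.assoc)
  show ?thesis unfolding e e1 e2 e3 e4 using h by (simp add: power2_eq_square algebra_simps)
qed

lemma disc:
  fixes a b c :: real
  assumes "a \<ge> 0" "\<And>t. 0 \<le> a*t^2 + 2*b*t + c"
  shows "b^2 \<le> a * c"
proof (cases "a = 0")
  case True
  have "b = 0"
  proof (rule ccontr)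
    assume "b \<noteq> 0"
    have "0 \<le> 2*b*(-(c+1)/(2*b)) + c" using assms(2)[of "-(c+1)/(2*b)"] True by simp
    thus False using \<open>b \<noteq> 0\<close> by (simp add: field_simps)
  qed
  then show ?thesis using True by simp
next
  case False
  hence ap: "a > 0" using assms(1) by simp
  have "0 \<le> a*(-b/a)^2 + 2*b*(-b/a) + c" by (rule assms(2))
  hence "0 \<le> (a*c - b^2)/a" using ap by (simp add: field_simps power2_eq_square)
  thus ?thesis using ap by (simp add: divide_nonneg_pos zero_le_divide_iff)
qed



lemma amgm2: fixes A B :: real shows "A*B \<le> ((A+B)/2)^2"
proof -
  have "0 \<le> (A-B)^2" by simp
  thus ?thesis by (simp add: power2_eq_square algebra_simps divide_simps)
qed

lemma amgm:
  fixes a b c x y :: real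
  assumes "0\<le>a" "0\<le>b" "0\<le>x" "0\<le>y" "0\<le>c" "c^2 \<le> x*y"
  shows "a*b*c \<le> (a^2*y + b^2*x)/2"
proof -
  have "(a*b*c)^2 = a^2*b^2*c^2" by (simp add: power_mult_distrib)
  also have "\<dots> \<le> a^2*b^2*(x*y)"
    using assms by (simp add: mult_left_mono)
  also have "\<dots> = (a^2*y)*(b^2*x)" by simp
  also have "\<dots> \<le> ((a^2*y + b^2*x)/2)^2" by (rule amgm2)
  finally show ?thesis
    by (rule power2_le_imp_le) (use assms in simp)
qed



definition amp :: "(nat\<Rightarrow>complex) \<Rightarrow> (nat\<Rightarrow>complex) \<Rightarrow> nat \<Rightarrow> nat \<Rightarrow> complex" where
  "amp a b n j = (\<Prod>i<n. if odd (j div 2^i) then b i else a i)"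

lemma sum_split_double:
  fixes f :: "nat \<Rightarrow> 'a::comm_monoid_add"
  shows "(\<Sum>j<M+M. f j) = (\<Sum>j<M. f j) + (\<Sum>k<M. f (M + k))"
proof -
  have "(\<Sum>j<M+M. f j) = (\<Sum>j\<in>{0..<M}. f j) + (\<Sum>j\<in>{M..<M+M}. f j)"
    by (simp add: atLeast0LessThan[symmetric] sum.atLeastLessThan_concat)
  also have "(\<Sum>j\<in>{M..<M+M}. f j) = (\<Sum>k\<in>{0..<M}. f (M + k))"
    using sum.atLeastLessThan_shift_bounds[of f 0 M M] by (simp add: comp_def)
  finally show ?thesis by (simp add: atLeast0LessThan)
qed

lemma odd_high:
  fixes k i n :: nat
  assumes "i < n"
  shows "odd ((2^n + k) div 2^i) = odd (k div 2^i)"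
proof -
  have "2^n = (2::nat)^(n-i) * 2^i" using assms by (simp add: power_add[symmetric])
  hence "(2^n + k) div 2^i = 2^(n-i) + k div 2^i" by simp
  moreover have "even ((2::nat)^(n-i))" using assms by simp
  ultimately show ?thesis by simp
qed

lemma amp_Suc: "amp a b (Suc n) j = amp a b n j * (if odd (j div 2^n) then b n else a n)"
  unfolding amp_def by simp

lemma amp_high: "amp a b n (2^n + k) = amp a b n k"
  unfolding amp_def by (intro prod.cong refl) (simp add: odd_high)

lemma amp_norm:
  "(\<Sum>j<2^n. (cmod (amp a b n j))^2) = (\<Prod>i<n. (cmod (a i))^2 + (cmod (b i))^2)"
proof (induction n)
  case 0 thus ?case by (simp add: amp_def)
next
  case (Suc n)
  have lo: "\<And>j. j < 2^n \<Longrightarrow> amp a b (Suc n) j = amp a b n j * a n"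
    unfolding amp_Suc by simp
  have hi: "\<And>k. k < 2^n \<Longrightarrow> amp a b (Suc n) (2^n + k) = amp a b n k * b n"
    unfolding amp_Suc amp_high by simp
  have "(\<Sum>j<2^Suc n. (cmod (amp a b (Suc n) j))^2)
     = (\<Sum>j<2^n. (cmod (amp a b (Suc n) j))^2) + (\<Sum>k<2^n. (cmod (amp a b (Suc n) (2^n + k)))^2)"
    using sum_split_double[of "\<lambda>j. (cmod (amp a b (Suc n) j))^2" "2^n"] by (simp add: mult_2)
  also have "\<dots> = (\<Sum>j<2^n. (cmod (amp a b n j))^2 * (cmod (a n))^2) + (\<Sum>k<2^n. (cmod (amp a b n k))^2 * (cmod (b n))^2)"
    using lo hi by (simp add: norm_mult power_mult_distrib)
  also have "\<dots> = (\<Sum>j<2^n. (cmod (amp a b n j))^2) * ((cmod (a n))^2 + (cmod (b n))^2)"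
    by (simp add: sum_distrib_right distrib_left)
  finally show ?case using Suc.IH by simp
qed

lemma amp_zero: "amp a b n 0 = (\<Prod>i<n. a i)"
  unfolding amp_def by simp

lemma odd_pow_div:
  fixes i l :: nat
  shows "odd ((2::nat)^i div 2^l) \<longleftrightarrow> l = i"
proof (cases "l \<le> i")
  case True
  hence "(2::nat)^i div 2^l = 2^(i-l)" by (simp add: power_diff)
  thus ?thesis using True by auto
next
  case False
  hence "(2::nat)^i < 2^l" by simp
  hence "(2::nat)^i div 2^l = 0" by simp
  thus ?thesis using False by auto
qed

lemma amp_pow: "i < n \<Longrightarrow> amp a b n (2^i) = b i * (\<Prod>l\<in>{..<n}-{i}. a l)"
proof -
  assume i: "i < n"
  have "amp a b n (2^i) = (\<Prod>l<n. if l = i then b l else a l)"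
    unfolding amp_def by (intro prod.cong refl) (simp add: odd_pow_div)
  also have "\<dots> = (if i = i then b i else a i) * (\<Prod>l\<in>{..<n}-{i}. if l = i then b l else a l)"
    using i by (intro prod.remove) auto
  also have "(\<Prod>l\<in>{..<n}-{i}. if l = i then b l else a l) = (\<Prod>l\<in>{..<n}-{i}. a l)"
    by (rule prod.cong) auto
  finally show ?thesis by simp
qed

definition bet :: "(nat \<Rightarrow> real) \<Rightarrow> nat \<Rightarrow> real" where
  "bet x n = (\<Prod>i<n. x i)"
definition qq :: "(nat \<Rightarrow> real) \<Rightarrow> nat \<Rightarrow> real" where
  "qq x n = (\<Sum>i<n. (1 - x i) * (\<Prod>l\<in>{..<n}-{i}. x l))"

lemma qq_Suc: "qq x (Suc n) = x n * qq x n + (1 - x n) * bet x n"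
proof -
  have "qq x (Suc n) = (\<Sum>i<n. (1 - x i) * (\<Prod>l\<in>{..<Suc n}-{i}. x l)) + (1 - x n) * (\<Prod>l\<in>{..<Suc n}-{n}. x l)"
    unfolding qq_def by simp
  also have "(\<Sum>i<n. (1 - x i) * (\<Prod>l\<in>{..<Suc n}-{i}. x l)) = (\<Sum>i<n. (1 - x i) * (x n * (\<Prod>l\<in>{..<n}-{i}. x l)))"
  proof (intro sum.cong refl)
    fix i assume "i \<in> {..<n}"
    hence "{..<Suc n}-{i} = insert n ({..<n}-{i})" by auto
    thus "(1 - x i) * (\<Prod>l\<in>{..<Suc n}-{i}. x l) = (1 - x i) * (x n * (\<Prod>l\<in>{..<n}-{i}. x l))"
      by simp
  qed
  also have "{..<Suc n}-{n} = {..<n}" by auto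
  finally show ?thesis unfolding qq_def bet_def by (simp add: sum_distrib_left mult_ac)
qed

lemma bet_Suc: "bet x (Suc n) = bet x n * x n"
  unfolding bet_def by simp

lemma key_ineq:
  assumes "\<And>i. 0 \<le> x i" "\<And>i. x i \<le> 1"
  shows "2 * bet x n * (1 - bet x n) \<le> qq x n * (1 + bet x n) \<and> 0 \<le> bet x n \<and> bet x n \<le> 1 \<and> 0 \<le> qq x n"
proof (induction n)
  case 0 thus ?case by (simp add: bet_def qq_def)
next
  case (Suc n)
  define B where "B = bet x n"
  define Q where "Q = qq x n"
  define y where "y = x n"
  have IH: "2*B*(1-B) \<le> Q*(1+B)" "0 \<le> B" "B \<le> 1" "0 \<le> Q" using Suc.IH unfolding B_def Q_def by auto
  have y: "0 \<le> y" "y \<le> 1" using assms unfolding y_def by auto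
  have bS: "bet x (Suc n) = B*y" unfolding B_def y_def by (simp add: bet_Suc)
  have qS: "qq x (Suc n) = y*Q + (1-y)*B" unfolding B_def y_def Q_def by (simp add: qq_Suc)
  have B1: "0 \<le> B*y" "B*y \<le> 1" using IH y by (simp_all add: mult_le_one)
  have Q1: "0 \<le> y*Q + (1-y)*B" using IH y by simp
  have "(y*Q + (1-y)*B)*(1+B*y)*(1+B) = (y*(1+B*y))*(Q*(1+B)) + (1-y)*B*(1+B*y)*(1+B)"
    by (simp add: algebra_simps)
  also have "\<dots> \<ge> (y*(1+B*y))*(2*B*(1-B)) + (1-y)*B*(1+B*y)*(1+B)"
    using IH y by (intro add_right_mono mult_left_mono) simp_all
  finally have s1: "(y*Q + (1-y)*B)*(1+B*y)*(1+B) \<ge> (y*(1+B*y))*(2*B*(1-B)) + (1-y)*B*(1+B*y)*(1+B)" .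
  have id: "(y*(1+B*y))*(2*B*(1-B)) + (1-y)*B*(1+B*y)*(1+B) - 2*(B*y)*(1-B*y)*(1+B)
          = B*(1-y)*((1-y)*(1+B) + y*(1-B)^2)"
    by (simp add: algebra_simps power2_eq_square)
  have "0 \<le> B*(1-y)*((1-y)*(1+B) + y*(1-B)^2)" using IH y by simp
  hence "2*(B*y)*(1-B*y)*(1+B) \<le> (y*Q + (1-y)*B)*(1+B*y)*(1+B)" using s1 id by linarith
  hence "2*(B*y)*(1-B*y) \<le> (y*Q + (1-y)*B)*(1+B*y)"
    using IH by (simp add: mult_le_cancel_right_pos add_pos_nonneg)
  thus ?case unfolding bS qS using B1 Q1 by simp
qed



lemma amgm2': fixes A B :: real shows "A*B \<le> ((A+B)/2)^2"
proof -
  have "0 \<le> (A-B)^2" by simp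
  thus ?thesis by (simp add: power2_eq_square algebra_simps divide_simps)
qed

lemma finish:
  fixes p c Z u w Qp :: real
  assumes "c > 0" "0 \<le> Z" "0 \<le> w" "w^2 \<le> u" "w \<le> 1" "0 \<le> u"
    and "Qp \<le> p - (3/2)*c*u + 2*Z*w"
  shows "Qp \<le> p + min (3*Z) (Z^2/c)"
proof -
  have a: "2*Z*w \<le> Z^2/c + c*w^2"
  proof -
    have "0 \<le> (Z - c*w)^2" by simp
    hence "2*Z*(c*w) \<le> Z^2 + (c*w)^2" by (simp add: power2_eq_square algebra_simps)
    hence "2*Z*w*c \<le> (Z^2/c + c*w^2)*c" using assms(1) by (simp add: power2_eq_square algebra_simps)
    thus ?thesis using assms(1) by (simp add: mult_le_cancel_right_pos)
  qed
  have "c*w^2 \<le> c*u" using assms(1,4) by simp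
  moreover have "0 \<le> c*u" using assms(1,6) by simp
  ultimately have b: "Qp \<le> p + Z^2/c" using a assms(7) by linarith
  have "2*Z*w \<le> 2*Z" using assms(2,5) by (simp add: mult_left_le)
  moreover have "0 \<le> c*u" "0 \<le> Z" using assms(1,6,2) by simp_all
  ultimately have "Qp \<le> p + 3*Z" using assms(7) by linarith
  thus ?thesis using b by simp
qed

lemma cross_bound:
  fixes Qx Qy B q m :: real
  assumes "0 \<le> Qx" "0 \<le> Qy" "B^2 \<le> Qx*Qy" "q > 0" "m > 0"
  shows "2*B \<le> (m/q)*Qx + (q/m)*Qy"
proof (cases "B \<le> 0")
  case True
  have "0 \<le> (m/q)*Qx" "0 \<le> (q/m)*Qy" using assms by simp_all
  thus ?thesis using True by linarith
next
  case False
  have "(2*B)^2 = 4*B^2" by (simp add: power2_eq_square)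
  also have "\<dots> \<le> 4*(((m/q)*Qx) * ((q/m)*Qy))" using assms by simp
  also have "\<dots> \<le> 4*(((m/q)*Qx + (q/m)*Qy)/2)^2" using amgm2'[of "(m/q)*Qx" "(q/m)*Qy"] by simp
  also have "\<dots> = ((m/q)*Qx + (q/m)*Qy)^2" by (simp add: power2_eq_square)
  finally show ?thesis
    by (rule power2_le_imp_le) (use assms in simp)
qed

lemma arith_main:
  fixes p c Z \<beta> q m T1 T2 Qp Qx Qy Bxy Bc Qr1 :: real
  assumes hp: "p = 2/3 + c" and hc: "c > 0" and hb: "0 \<le> \<beta>" and hq: "0 \<le> q" and hm: "0 \<le> m"
    and hs: "\<beta> + q + m = 1"
    and H: "2*\<beta>*(1-\<beta>) \<le> q*(1+\<beta>)"
    and hT1: "0 \<le> T1" and hT2: "0 \<le> T2" and hT: "T1 + T2 = 1 - p" and hZ: "0 \<le> Z"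
    and hr0: "0 \<le> Qr1" and hr1: "Qr1 \<le> q*T1" and hy0: "0 \<le> Qy" and hy1: "Qy \<le> m*T2"
    and hx: "Qx = \<beta>*p + 2*Bc + Qr1" and hBc: "Bc \<le> sqrt \<beta> * Z * sqrt q"
    and hpi: "Qp = Qx + Qy + 2*Bxy" and hcs: "Bxy^2 \<le> Qx*Qy" and hx0: "0 \<le> Qx"
  shows "Qp \<le> p + min (3*Z) (Z^2/c)"
proof -
  have b1: "\<beta> \<le> 1" using hs hq hm by linarith
  consider "m = 0" | "q = 0" "m > 0" | "q > 0" "m > 0" using hq hm by linarith
  then show ?thesis
  proof cases
    case 1
    have "Qy = 0" using hy0 hy1 1 by simp
    hence "Bxy = 0" using hcs by simp
    hence Qpx: "Qp = Qx" using hpi \<open>Qy = 0\<close> by simp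
    define w where "w = sqrt \<beta> * sqrt q"
    have w0: "0 \<le> w" unfolding w_def using hb hq by simp
    have w2: "w^2 = \<beta> * q" unfolding w_def using hb hq by (simp add: power_mult_distrib)
    have "\<beta> * q \<le> 1 * q" using b1 hq by (rule mult_right_mono)
    hence w2u: "w^2 \<le> q" using w2 by simp
    have "q \<le> 1" using hs hb hm by linarith
    hence "w^2 \<le> 1" using w2u by simp
    hence w1: "w \<le> 1" using w0 by (simp add: power_le_one_iff)
    have "q*T1 \<le> q*(1-p)" using hq hT hT2 by (intro mult_left_mono) linarith+
    moreover have "2*Bc \<le> 2*Z*w" using hBc unfolding w_def by (simp add: mult_ac)
    moreover have "\<beta>*p + q*(1-p) = p - q*(1/3 + 2*c)"
    proof -
      have hbq: "\<beta> = 1 - q" using hs 1 by simp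
      show ?thesis by (simp add: hbq hp algebra_simps divide_simps)
    qed
    moreover have "0 \<le> q*(1/3 + c/2)" using hq hc by simp
    ultimately have "Qp \<le> p - (3/2)*c*q + 2*Z*w" using Qpx hx hr1
      by (simp add: algebra_simps)
    thus ?thesis by (rule finish[OF hc hZ w0 w2u w1 hq])
  next
    case 2
    have "\<beta>*(1-\<beta>) = 0"
    proof -
      have "0 \<le> \<beta>*(1-\<beta>)" using hb b1 by simp
      thus ?thesis using H 2 by simp
    qed
    moreover have "\<beta> \<noteq> 1" using hs 2 by linarith
    ultimately have "\<beta> = 0" by simp
    hence "Bc \<le> 0" using hBc by simp
    moreover have "Qr1 = 0" using hr0 hr1 2 by simp
    ultimately have "Qx = 0" using hx hx0 \<open>\<beta> = 0\<close> by simp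
    hence "Bxy = 0" using hcs by simp
    hence "Qp = Qy" using hpi \<open>Qx = 0\<close> by simp
    moreover have "m = 1" using hs 2 \<open>\<beta> = 0\<close> by simp
    ultimately have "Qp \<le> p - (3/2)*c*1 + 2*Z*0" using hy1 hT hT1 hp hc by simp
    note hh = this
    show ?thesis by (rule finish[OF hc hZ, where w=0 and u=1]) (use hh in simp_all)
  next
    case 3
    define u where "u = 1 - \<beta>"
    have uqm: "u = q + m" using hs unfolding u_def by simp
    have u0: "0 \<le> u" using b1 unfolding u_def by simp
    have cr: "2*Bxy \<le> (m/q)*Qx + (q/m)*Qy" by (rule cross_bound) (use hx0 hy0 hcs 3 in auto)
    have "Qp \<le> (1 + m/q)*Qx + (1 + q/m)*Qy" using hpi cr by (simp add: algebra_simps)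
    also have "1 + m/q = u/q" using 3 uqm by (simp add: field_simps)
    also have "1 + q/m = u/m" using 3 uqm by (simp add: field_simps)
    finally have s1: "Qp \<le> (u/q)*Qx + (u/m)*Qy" .
    have "(u/m)*Qy \<le> (u/m)*(m*T2)" using hy1 u0 3 by (intro mult_left_mono) simp_all
    hence s2: "(u/m)*Qy \<le> u*T2" using 3 by simp
    define w where "w = u * sqrt \<beta> / sqrt q"
    have sq: "sqrt q * sqrt q = q" using hq by simp
    have w0: "0 \<le> w" unfolding w_def using hb hq u0 by simp
    have uq: "u*\<beta>/q \<le> (1+\<beta>)/2" using H 3 unfolding u_def by (simp add: field_simps)
    have "(u/q)*Qx = (u*\<beta>/q)*p + 2*Bc*(u/q) + (u/q)*Qr1" using hx by (simp add: algebra_simps)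
    moreover have "(u*\<beta>/q)*p \<le> ((1+\<beta>)/2)*p" using uq hp hc by (intro mult_right_mono) simp_all
    moreover have "2*Bc*(u/q) \<le> 2*(sqrt \<beta> * Z * sqrt q)*(u/q)" using hBc u0 3 by (intro mult_right_mono) simp_all
    moreover have "2*(sqrt \<beta> * Z * sqrt q)*(u/q) = 2*Z*w"
    proof -
      have "sqrt q > 0" using 3 by simp
      hence e: "sqrt q * (u/q) = u / sqrt q" using sq by (simp add: field_simps)
      have "2*(sqrt \<beta> * Z * sqrt q)*(u/q) = 2*Z*sqrt \<beta>*(sqrt q*(u/q))" by (simp only: mult_ac)
      also have "\<dots> = 2*Z*w" unfolding e w_def by simp
      finally show ?thesis .
    qed
    moreover have "(u/q)*Qr1 \<le> (u/q)*(q*T1)" using hr1 u0 3 by (intro mult_left_mono) simp_all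
    moreover have "(u/q)*(q*T1) = u*T1" using 3 by simp
    ultimately have s3: "(u/q)*Qx \<le> ((1+\<beta>)/2)*p + 2*Z*w + u*T1" by linarith
    have "((1+\<beta>)/2)*p + u*(T1+T2) = ((1+\<beta>)/2)*p + u*(1-p)" using hT by simp
    also have "\<dots> = p - (3/2)*c*u" by (simp add: u_def hp algebra_simps divide_simps)
    finally have "((1+\<beta>)/2)*p + u*(T1+T2) = p - (3/2)*c*u" .
    hence main: "Qp \<le> p - (3/2)*c*u + 2*Z*w" using s1 s2 s3 by (simp add: algebra_simps)
    have w2: "w^2 = u*(u*\<beta>/q)" unfolding w_def using hb hq by (simp add: power_mult_distrib power_divide power2_eq_square)
    have "u*(u*\<beta>/q) \<le> u*((1+\<beta>)/2)" using uq u0 by (rule mult_left_mono)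
    hence w2': "w^2 \<le> u*((1+\<beta>)/2)" using w2 by simp
    have "u*((1+\<beta>)/2) \<le> u*1" using b1 u0 by (intro mult_left_mono) simp_all
    hence w2u: "w^2 \<le> u" using w2' by simp
    have "u \<le> 1" unfolding u_def using hb by simp
    hence "w^2 \<le> 1" using w2u by simp
    hence w1: "w \<le> 1" using w0 by (simp add: power_le_one_iff)
    show ?thesis by (rule finish[OF hc hZ w0 w2u w1 u0 main])
  qed
qed



locale psd =
  fixes n :: nat and \<rho> :: "nat \<Rightarrow> nat \<Rightarrow> complex"
  assumes herm: "\<forall>j<2^n. \<forall>k<2^n. \<rho> k j = cnj (\<rho> j k)"
    and pos: "\<And>v. 0 \<le> Re (Bf n \<rho> v v)"
begin

lemma CS: "(Re (Bf n \<rho> x y))^2 \<le> Re (Bf n \<rho> x x) * Re (Bf n \<rho> y y)"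
proof (rule disc)
  show "0 \<le> Re (Bf n \<rho> x x)" by (rule pos)
  fix t :: real
  have "0 \<le> Re (Bf n \<rho> (\<lambda>j. complex_of_real t * x j + complex_of_real 1 * y j) (\<lambda>j. complex_of_real t * x j + complex_of_real 1 * y j))"
    by (rule pos)
  thus "0 \<le> Re (Bf n \<rho> x x) * t\<^sup>2 + 2 * Re (Bf n \<rho> x y) * t + Re (Bf n \<rho> y y)"
    unfolding ReQ_lin[OF herm] by (simp add: algebra_simps)
qed

definition ev :: "nat \<Rightarrow> complex \<Rightarrow> nat \<Rightarrow> complex" where
  "ev j a = (\<lambda>i. if i = j then a else 0)"

lemma Bf_ev: "j < 2^n \<Longrightarrow> k < 2^n \<Longrightarrow> Bf n \<rho> (ev j a) (ev k b) = cnj a * \<rho> j k * b"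
proof -
  assume a: "j < 2^n" "k < 2^n"
  let ?C = "cnj a * \<rho> j k * b"
  have s: "\<And>i l. cnj (ev j a i) * \<rho> i l * ev k b l = (if i = j then (if l = k then ?C else 0) else 0)"
    unfolding ev_def by simp
  have inner: "\<And>i. (\<Sum>l<2^n. if i = j then (if l = k then ?C else 0) else 0) = (if i = j then ?C else 0)"
    using a by (simp add: sum.delta)
  have "Bf n \<rho> (ev j a) (ev k b) = (\<Sum>i<2^n. if i = j then ?C else 0)"
    unfolding Bf_def s inner ..
  also have "\<dots> = ?C" using a by (simp add: sum.delta)
  finally show ?thesis .
qed

lemma diag_nonneg: "k < 2^n \<Longrightarrow> 0 \<le> Re (\<rho> k k)"
  using pos[of "ev k 1"] Bf_ev[of k k 1 1] by simp

lemma diag_real: assumes "k < 2^n" shows "\<rho> k k = complex_of_real (Re (\<rho> k k))"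
proof -
  have "\<rho> k k = cnj (\<rho> k k)" using herm[rule_format, OF assms assms] .
  hence "Im (\<rho> k k) = Im (cnj (\<rho> k k))" by (rule arg_cong)
  hence "Im (\<rho> k k) = 0" by simp
  thus ?thesis by (simp add: complex_eq_iff)
qed

lemma offdiag: assumes "j < 2^n" "k < 2^n"
  shows "(cmod (\<rho> j k))^2 \<le> Re (\<rho> j j) * Re (\<rho> k k)"
proof -
  let ?w = "cnj (\<rho> j k)"
  have e1: "Re (Bf n \<rho> (ev j 1) (ev k ?w)) = (cmod (\<rho> j k))^2"
    using Bf_ev[OF assms, of 1 ?w] by (simp add: complex_norm_square[symmetric])
  have e2: "Re (Bf n \<rho> (ev j 1) (ev j 1)) = Re (\<rho> j j)"
    using Bf_ev[OF assms(1) assms(1), of 1 1] by simp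
  have e3: "Re (Bf n \<rho> (ev k ?w) (ev k ?w)) = (cmod (\<rho> j k))^2 * Re (\<rho> k k)"
  proof -
    have "Bf n \<rho> (ev k ?w) (ev k ?w) = \<rho> j k * cnj (\<rho> j k) * \<rho> k k"
      using Bf_ev[OF assms(2) assms(2), of ?w ?w] by (simp add: mult.commute mult.left_commute)
    also have "\<dots> = complex_of_real ((cmod (\<rho> j k))^2 * Re (\<rho> k k))"
      by (subst diag_real[OF assms(2)]) (simp add: complex_norm_square[symmetric])
    finally show ?thesis by simp
  qed
  have "((cmod (\<rho> j k))^2)^2 \<le> Re (\<rho> j j) * ((cmod (\<rho> j k))^2 * Re (\<rho> k k))"
    using CS[of "ev j 1" "ev k ?w"] e1 e2 e3 by simp
  hence h: "(cmod (\<rho> j k))^2 * (cmod (\<rho> j k))^2 \<le> (cmod (\<rho> j k))^2 * (Re (\<rho> j j) * Re (\<rho> k k))"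
    by (simp add: power2_eq_square algebra_simps)
  show ?thesis
  proof (cases "cmod (\<rho> j k) = 0")
    case True thus ?thesis using diag_nonneg[OF assms(1)] diag_nonneg[OF assms(2)] by simp
  next
    case False
    hence "0 < (cmod (\<rho> j k))^2" by simp
    from h show ?thesis by (simp only: mult_le_cancel_left_pos[OF \<open>0 < (cmod (\<rho> j k))^2\<close>])
  qed
qed

end


context psd begin

definition dg :: "nat set \<Rightarrow> nat \<Rightarrow> real" where
  "dg S k = (if k \<in> S then Re (\<rho> k k) else 0)"

lemma trace_bound:
  assumes supp: "\<forall>j<2^n. j \<notin> S \<longrightarrow> v j = 0"
  shows "Re (Bf n \<rho> v v) \<le> (\<Sum>j<2^n. (cmod (v j))^2) * (\<Sum>k<2^n. dg S k)"
proof -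
  have "Re (Bf n \<rho> v v) = (\<Sum>j<2^n. \<Sum>k<2^n. Re (cnj (v j) * \<rho> j k * v k))"
    unfolding Bf_def by (simp add: Re_sum)
  also have "\<dots> \<le> (\<Sum>j<2^n. \<Sum>k<2^n. ((cmod (v j))^2 * dg S k + (cmod (v k))^2 * dg S j)/2)"
  proof (intro sum_mono)
    fix j k :: nat assume j: "j \<in> {..<2^n}" and k: "k \<in> {..<2^n}"
    have r: "Re (cnj (v j) * \<rho> j k * v k) \<le> cmod (v j) * cmod (v k) * cmod (\<rho> j k)"
      using complex_Re_le_cmod[of "cnj (v j) * \<rho> j k * v k"] by (simp add: norm_mult mult_ac)
    have dn: "0 \<le> dg S i" if "i < 2^n" for i
      unfolding dg_def using diag_nonneg[OF that] by simp
    show "Re (cnj (v j) * \<rho> j k * v k) \<le> ((cmod (v j))^2 * dg S k + (cmod (v k))^2 * dg S j)/2"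
    proof (cases "j \<in> S \<and> k \<in> S")
      case True
      have "cmod (v j) * cmod (v k) * cmod (\<rho> j k) \<le> ((cmod (v j))^2 * Re (\<rho> k k) + (cmod (v k))^2 * Re (\<rho> j j))/2"
        by (rule amgm) (use j k diag_nonneg offdiag in auto)
      thus ?thesis using r True unfolding dg_def by simp
    next
      case False
      hence "v j = 0 \<or> v k = 0" using supp j k by auto
      hence "Re (cnj (v j) * \<rho> j k * v k) = 0" by auto
      moreover have "0 \<le> ((cmod (v j))^2 * dg S k + (cmod (v k))^2 * dg S j)/2"
        using dn j k by simp
      ultimately show ?thesis by simp
    qed
  qed
  also have "\<dots> = ((\<Sum>j<2^n. \<Sum>k<2^n. (cmod (v j))^2 * dg S k) + (\<Sum>j<2^n. \<Sum>k<2^n. (cmod (v k))^2 * dg S j))/2"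
    by (simp add: sum.distrib sum_divide_distrib add_divide_distrib)
  also have "(\<Sum>j<2^n. \<Sum>k<2^n. (cmod (v k))^2 * dg S j) = (\<Sum>j<2^n. \<Sum>k<2^n. (cmod (v j))^2 * dg S k)"
    using sum.swap[of "\<lambda>j k. (cmod (v k))^2 * dg S j" "{..<2^n}" "{..<2^n}"] by simp
  also have "(\<Sum>j<2^n. \<Sum>k<2^n. (cmod (v j))^2 * dg S k) = (\<Sum>j<2^n. (cmod (v j))^2) * (\<Sum>k<2^n. dg S k)"
    by (simp add: sum_product)
  finally show ?thesis by (simp add: mult.commute)
qed

end


lemma Bf_cong:
  assumes "\<forall>j<2^n. u j = u' j" "\<forall>j<2^n. v j = v' j"
  shows "Bf n \<rho> u v = Bf n \<rho> u' v'"
  unfolding Bf_def using assms by (intro sum.cong refl) auto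

lemma sum_restrict_if:
  assumes "W \<subseteq> {..<N::nat}"
  shows "(\<Sum>j<N. if j \<in> W then f j else 0) = (\<Sum>j\<in>W. f j)"
proof -
  have "(\<Sum>j<N. if j \<in> W then f j else 0) = sum f ({..<N} \<inter> W)"
    by (rule sum.inter_restrict[symmetric]) simp
  also have "{..<N} \<inter> W = W" using assms by auto
  finally show ?thesis .
qed

lemma sum_pow_reindex:
  "(\<Sum>j\<in>(\<lambda>i. (2::nat)^i) ` {..<n}. f j) = (\<Sum>i<n. f (2^i))"
proof -
  have "inj_on (\<lambda>i. (2::nat)^i) {..<n}" by (auto simp: inj_on_def)
  thus ?thesis by (simp add: sum.reindex)
qed

context psd begin

lemma ReQ_add:
  "Re (Bf n \<rho> (\<lambda>j. u j + w j) (\<lambda>j. u j + w j)) = Re (Bf n \<rho> u u) + Re (Bf n \<rho> w w) + 2 * Re (Bf n \<rho> u w)"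
proof -
  have e: "Bf n \<rho> (\<lambda>j. u j + w j) (\<lambda>j. u j + w j) = Bf n \<rho> u u + Bf n \<rho> u w + (Bf n \<rho> w u + Bf n \<rho> w w)"
    by (simp only: Bf_add_left Bf_add_right)
  have h: "Bf n \<rho> w u = cnj (Bf n \<rho> u w)" by (rule Bf_herm[OF herm])
  show ?thesis unfolding e h by simp
qed

end


theorem corollary4p7:
  fixes n :: nat and \<rho> :: "nat \<Rightarrow> nat \<Rightarrow> complex" and c :: real and \<pi> :: "nat \<Rightarrow> complex"
  assumes "density_matrix n \<rho>"
    and "\<rho> 0 0 = complex_of_real (2/3 + c)"
    and "c > 0"
    and "pure_product_state n \<pi>"
  shows "Re (quad_form n \<rho> \<pi>) \<le> Re (\<rho> 0 0) + min (3 * zvec_norm n \<rho>) ((zvec_norm n \<rho>)\<^sup>2 / c)"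
proof -
  have dm: "\<forall>j<2^n. \<forall>k<2^n. \<rho> k j = cnj (\<rho> j k)" "\<And>v. 0 \<le> Re (quad_form n \<rho> v)" "(\<Sum>j<2^n. \<rho> j j) = 1"
    using assms(1) unfolding density_matrix_def by (blast, blast, blast)
  interpret psd n \<rho>
  proof
    show "\<forall>j<2^n. \<forall>k<2^n. \<rho> k j = cnj (\<rho> j k)" by (rule dm(1))
    fix v show "0 \<le> Re (Bf n \<rho> v v)" using dm(2)[of v] unfolding Q_Bf .
  qed
  obtain a b where ab: "\<forall>i<n. (cmod (a i))\<^sup>2 + (cmod (b i))\<^sup>2 = 1"
    and pa: "\<forall>j<2^n. \<pi> j = amp a b n j"
    using assms(4) unfolding pure_product_state_def amp_def by blast
  define p where "p = Re (\<rho> 0 0)"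
  have hp: "p = 2/3 + c" using assms(2) p_def by simp
  have r00: "\<rho> 0 0 = complex_of_real p" using assms(2) hp by simp
  define Z where "Z = zvec_norm n \<rho>"
  define W1 where "W1 = (\<lambda>i. (2::nat)^i) ` {..<n}"
  define W2 where "W2 = {j::nat. j \<noteq> 0 \<and> j \<notin> W1}"
  define w0 where "w0 = (\<lambda>j::nat. if j = 0 then \<pi> 0 else 0)"
  define r1 where "r1 = (\<lambda>j. if j \<in> W1 then \<pi> j else 0)"
  define r2 where "r2 = (\<lambda>j. if j \<in> W2 then \<pi> j else 0)"
  define x where "x = (\<lambda>j. w0 j + r1 j)"
  have W1sub: "W1 \<subseteq> {..<2^n}" unfolding W1_def by auto
  have W1nz: "0 \<notin> W1" unfolding W1_def by auto
  have decomp: "\<forall>j<2^n. \<pi> j = x j + r2 j"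
    unfolding x_def w0_def r1_def r2_def W2_def using W1nz by auto
  have Qp_eq: "Re (quad_form n \<rho> \<pi>) = Re (Bf n \<rho> x x) + Re (Bf n \<rho> r2 r2) + 2 * Re (Bf n \<rho> x r2)"
  proof -
    have "quad_form n \<rho> \<pi> = Bf n \<rho> (\<lambda>j. x j + r2 j) (\<lambda>j. x j + r2 j)"
      unfolding Q_Bf by (rule Bf_cong) (use decomp in auto)
    thus ?thesis using ReQ_add[of x r2] by simp
  qed
  have Qx_eq: "Re (Bf n \<rho> x x) = Re (Bf n \<rho> w0 w0) + Re (Bf n \<rho> r1 r1) + 2 * Re (Bf n \<rho> w0 r1)"
    unfolding x_def by (rule ReQ_add)
  define \<beta> where "\<beta> = (cmod (\<pi> 0))^2"
  have w0_ev: "w0 = ev 0 (\<pi> 0)" unfolding w0_def ev_def by auto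
  have Qw0: "Re (Bf n \<rho> w0 w0) = \<beta> * p"
  proof -
    have "Bf n \<rho> w0 w0 = cnj (\<pi> 0) * \<rho> 0 0 * \<pi> 0" unfolding w0_ev by (rule Bf_ev) simp_all
    also have "\<dots> = complex_of_real p * (\<pi> 0 * cnj (\<pi> 0))" unfolding r00 by (simp add: mult_ac)
    also have "\<dots> = complex_of_real (\<beta> * p)" unfolding complex_norm_square[symmetric] \<beta>_def by (simp add: mult_ac)
    finally show ?thesis by simp
  qed
  define q where "q = (\<Sum>j<2^n. (cmod (r1 j))^2)"
  define m where "m = (\<Sum>j<2^n. (cmod (r2 j))^2)"
  define T1 where "T1 = (\<Sum>k<2^n. dg W1 k)"
  define T2 where "T2 = (\<Sum>k<2^n. dg W2 k)"
  have hr1: "Re (Bf n \<rho> r1 r1) \<le> q * T1" unfolding q_def T1_def by (rule trace_bound) (simp add: r1_def)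
  have hy1: "Re (Bf n \<rho> r2 r2) \<le> m * T2" unfolding m_def T2_def by (rule trace_bound) (simp add: r2_def)
  have dgn: "\<And>S k. k < 2^n \<Longrightarrow> 0 \<le> dg S k" unfolding dg_def using diag_nonneg by simp
  have T1n: "0 \<le> T1" unfolding T1_def by (rule sum_nonneg) (use dgn in simp)
  have T2n: "0 \<le> T2" unfolding T2_def by (rule sum_nonneg) (use dgn in simp)
  have hT: "T1 + T2 = 1 - p"
  proof -
    have "Re (\<Sum>j<2^n. \<rho> j j) = 1" using dm(3) by simp
    hence tr: "(\<Sum>k<2^n. Re (\<rho> k k)) = 1" by (simp add: Re_sum)
    have pw: "\<And>k. Re (\<rho> k k) = (if k = 0 then Re (\<rho> k k) else 0) + dg W1 k + dg W2 k"
      unfolding dg_def W2_def using W1nz by auto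
    have "(\<Sum>k<2^n. Re (\<rho> k k)) = (\<Sum>k<2^n. (if k = 0 then Re (\<rho> k k) else 0)) + T1 + T2"
      unfolding T1_def T2_def by (subst pw) (simp add: sum.distrib)
    also have "(\<Sum>k<(2::nat)^n. (if k = 0 then Re (\<rho> k k) else 0)) = p"
      unfolding p_def by (simp add: sum.delta)
    finally show ?thesis using tr by simp
  qed
  have tot: "(\<Sum>j<2^n. (cmod (\<pi> j))^2) = 1"
  proof -
    have "(\<Sum>j<2^n. (cmod (\<pi> j))^2) = (\<Sum>j<2^n. (cmod (amp a b n j))^2)"
      using pa by (intro sum.cong refl) simp
    also have "\<dots> = (\<Prod>i<n. (cmod (a i))^2 + (cmod (b i))^2)" by (rule amp_norm)
    also have "\<dots> = (\<Prod>i<n. (1::real))" using ab by (intro prod.cong refl) simp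
    finally show ?thesis by simp
  qed
  have hs: "\<beta> + q + m = 1"
  proof -
    have pw: "\<And>j. (cmod (\<pi> j))^2 = (if j = 0 then (cmod (\<pi> 0))^2 else 0) + (cmod (r1 j))^2 + (cmod (r2 j))^2"
      unfolding r1_def r2_def W2_def using W1nz by auto
    have "(\<Sum>j<2^n. (cmod (\<pi> j))^2) = (\<Sum>j<(2::nat)^n. (if j = 0 then (cmod (\<pi> 0))^2 else 0)) + q + m"
      unfolding q_def m_def by (subst pw) (simp add: sum.distrib)
    also have "(\<Sum>j<(2::nat)^n. (if j = 0 then (cmod (\<pi> 0))^2 else 0)) = \<beta>"
      unfolding \<beta>_def by (simp add: sum.delta)
    finally show ?thesis using tot by simp
  qed
  have b0: "0 \<le> \<beta>" unfolding \<beta>_def by simp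
  have q0: "0 \<le> q" unfolding q_def by (simp add: sum_nonneg)
  have m0: "0 \<le> m" unfolding m_def by (simp add: sum_nonneg)
  define xx where "xx = (\<lambda>i. if i < n then (cmod (a i))^2 else 1)"
  have xx0: "\<And>i. 0 \<le> xx i" unfolding xx_def by simp
  have xx1: "\<And>i. xx i \<le> 1"
  proof -
    fix i show "xx i \<le> 1"
    proof (cases "i < n")
      case True
      hence "(cmod (a i))^2 + (cmod (b i))^2 = 1" using ab by simp
      moreover have "0 \<le> (cmod (b i))^2" by simp
      moreover have "xx i = (cmod (a i))^2" unfolding xx_def using True by simp
      ultimately show ?thesis by linarith
    qed (simp add: xx_def)
  qed
  have bet_eq: "\<beta> = bet xx n"
  proof -
    have "\<pi> 0 = (\<Prod>i<n. a i)" using pa amp_zero[of a b n] by simp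
    hence "\<beta> = (\<Prod>i<n. cmod (a i))^2" unfolding \<beta>_def by (simp add: prod_norm)
    also have "\<dots> = (\<Prod>i<n. (cmod (a i))^2)" by (rule prod_power_distrib)
    also have "\<dots> = bet xx n" unfolding bet_def xx_def by (intro prod.cong refl) simp
    finally show ?thesis .
  qed
  have qq_eq: "q = qq xx n"
  proof -
    have "q = (\<Sum>j<2^n. if j \<in> W1 then (cmod (\<pi> j))^2 else 0)"
      unfolding q_def r1_def by (intro sum.cong refl) simp
    also have "\<dots> = (\<Sum>j\<in>W1. (cmod (\<pi> j))^2)" by (rule sum_restrict_if[OF W1sub])
    also have "\<dots> = (\<Sum>i<n. (cmod (\<pi> (2^i)))^2)" unfolding W1_def by (rule sum_pow_reindex)
    also have "\<dots> = (\<Sum>i<n. (1 - xx i) * (\<Prod>l\<in>{..<n}-{i}. xx l))"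
    proof (intro sum.cong refl)
      fix i assume i: "i \<in> {..<n}"
      hence "(2::nat)^i < 2^n" by simp
      hence "\<pi> (2^i) = b i * (\<Prod>l\<in>{..<n}-{i}. a l)" using pa amp_pow[of i n a b] i by simp
      hence "(cmod (\<pi> (2^i)))^2 = (cmod (b i))^2 * (\<Prod>l\<in>{..<n}-{i}. cmod (a l))^2"
        by (simp add: norm_mult prod_norm power_mult_distrib)
      also have "(\<Prod>l\<in>{..<n}-{i}. cmod (a l))^2 = (\<Prod>l\<in>{..<n}-{i}. xx l)"
        unfolding prod_power_distrib xx_def by (intro prod.cong refl) simp
      also have "(cmod (b i))^2 = 1 - xx i" using ab i unfolding xx_def by (simp add: algebra_simps)
      finally show "(cmod (\<pi> (2^i)))^2 = (1 - xx i) * (\<Prod>l\<in>{..<n}-{i}. xx l)" .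
    qed
    finally show ?thesis unfolding qq_def .
  qed
  have H: "2*\<beta>*(1-\<beta>) \<le> q*(1+\<beta>)"
    using key_ineq[of xx n, OF xx0 xx1] unfolding bet_eq qq_eq by simp
  have Z0: "0 \<le> Z" unfolding Z_def zvec_norm_def by (simp add: sum_nonneg)
  have hBc: "Re (Bf n \<rho> w0 r1) \<le> sqrt \<beta> * Z * sqrt q"
  proof -
    let ?S = "\<Sum>k<2^n. \<rho> 0 k * r1 k"
    have inner: "\<And>j. (\<Sum>k<2^n. cnj (w0 j) * \<rho> j k * r1 k) = (if j = 0 then cnj (\<pi> 0) * ?S else 0)"
      unfolding w0_def by (simp add: sum_distrib_left mult.assoc)
    have "Bf n \<rho> w0 r1 = (\<Sum>j<(2::nat)^n. if j = 0 then cnj (\<pi> 0) * ?S else 0)"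
      unfolding Bf_def inner ..
    also have "\<dots> = cnj (\<pi> 0) * ?S" by (simp add: sum.delta)
    finally have e: "Bf n \<rho> w0 r1 = cnj (\<pi> 0) * ?S" .
    define f where "f = (\<lambda>k. if k \<in> W1 then cmod (\<rho> 0 k) else 0)"
    define g where "g = (\<lambda>k. cmod (r1 k))"
    have "cmod ?S \<le> (\<Sum>k<2^n. cmod (\<rho> 0 k * r1 k))" by (rule norm_sum)
    also have "\<dots> = (\<Sum>k<2^n. f k * g k)" unfolding f_def g_def r1_def by (intro sum.cong refl) (simp add: norm_mult)
    finally have S1: "cmod ?S \<le> (\<Sum>k<2^n. f k * g k)" .
    have f2: "(\<Sum>k<2^n. (f k)^2) = Z^2"
    proof -
      have "(\<Sum>k<2^n. (f k)^2) = (\<Sum>k<2^n. if k \<in> W1 then (cmod (\<rho> 0 k))^2 else 0)"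
        unfolding f_def by (intro sum.cong refl) simp
      also have "\<dots> = (\<Sum>k\<in>W1. (cmod (\<rho> 0 k))^2)" by (rule sum_restrict_if[OF W1sub])
      also have "\<dots> = (\<Sum>i<n. (cmod (\<rho> 0 (2^i)))^2)" unfolding W1_def by (rule sum_pow_reindex)
      also have "\<dots> = (\<Sum>i<n. (cmod (\<rho> (2^i) 0))^2)"
      proof (intro sum.cong refl)
        fix i assume "i \<in> {..<n}"
        hence "(2::nat)^i < 2^n" by simp
        hence "\<rho> 0 (2^i) = cnj (\<rho> (2^i) 0)" using herm[rule_format, of "2^i" 0] by simp
        thus "(cmod (\<rho> 0 (2^i)))^2 = (cmod (\<rho> (2^i) 0))^2" by simp
      qed
      also have "\<dots> = Z^2" unfolding Z_def zvec_norm_def by (simp add: sum_nonneg)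
      finally show ?thesis .
    qed
    have g2: "(\<Sum>k<2^n. (g k)^2) = q" unfolding g_def q_def ..
    have "(\<Sum>k<2^n. f k * g k)^2 \<le> Z^2 * q"
      using Cauchy_Schwarz_ineq_sum[of f g "{..<2^n}"] f2 g2 by simp
    hence "(\<Sum>k<2^n. f k * g k) \<le> sqrt (Z^2 * q)" by (rule real_le_rsqrt)
    also have "\<dots> = Z * sqrt q" using Z0 by (simp add: real_sqrt_mult)
    finally have S2: "cmod ?S \<le> Z * sqrt q" using S1 by simp
    have "Re (Bf n \<rho> w0 r1) \<le> cmod (Bf n \<rho> w0 r1)" by (rule complex_Re_le_cmod)
    also have "\<dots> = cmod (\<pi> 0) * cmod ?S" unfolding e by (simp add: norm_mult)
    also have "\<dots> \<le> cmod (\<pi> 0) * (Z * sqrt q)" using S2 by (intro mult_left_mono) simp_all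
    also have "cmod (\<pi> 0) = sqrt \<beta>" unfolding \<beta>_def by simp
    finally show ?thesis by (simp add: mult_ac)
  qed
  have main: "Re (quad_form n \<rho> \<pi>) \<le> p + min (3*Z) (Z^2/c)"
  proof (rule arith_main[OF hp assms(3) b0 q0 m0 hs H T1n T2n hT Z0])
    show "0 \<le> Re (Bf n \<rho> r1 r1)" by (rule pos)
    show "Re (Bf n \<rho> r1 r1) \<le> q * T1" by (rule hr1)
    show "0 \<le> Re (Bf n \<rho> r2 r2)" by (rule pos)
    show "Re (Bf n \<rho> r2 r2) \<le> m * T2" by (rule hy1)
    show "Re (Bf n \<rho> x x) = \<beta> * p + 2 * Re (Bf n \<rho> w0 r1) + Re (Bf n \<rho> r1 r1)"
      using Qx_eq Qw0 by simp
    show "Re (Bf n \<rho> w0 r1) \<le> sqrt \<beta> * Z * sqrt q" by (rule hBc)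
    show "Re (quad_form n \<rho> \<pi>) = Re (Bf n \<rho> x x) + Re (Bf n \<rho> r2 r2) + 2 * Re (Bf n \<rho> x r2)" by (rule Qp_eq)
    show "(Re (Bf n \<rho> x r2))^2 \<le> Re (Bf n \<rho> x x) * Re (Bf n \<rho> r2 r2)" by (rule CS)
    show "0 \<le> Re (Bf n \<rho> x x)" by (rule pos)
  qed
  thus ?thesis unfolding p_def Z_def .
qed


end
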